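(* Let $\mathcal{H}=(V,E)$ be a hypergraph with $\emptyset\notin E$. Then $\mathcal{H}$ is threshold if and only if its split-incidence graph is connected-domishold.
   Context: A hypergraph $\mathcal{H}=(V,E)$ consists of a finite set $V$ and a set $E$ of subsets of $V$ (hyperedges). It is threshold if there exist $w:V\to\mathbb{R}_{\ge0}$ and $t\in\mathbb{R}_{\ge0}$ such that for all $X\subseteq V$, $\sum_{x\in X}w(x)\le t$ iff $X$ contains no hyperedge. The split-incidence graph of $\mathcal{H}$ is the graph with vertex set $V\cup E$ in which $V$ is a clique, $E$ is an independent set, and $v\in V$ is adjacent to $e\in E$ iff $v\in e$. A connected dominating set of a connected graph $G$ is a set $S\subseteq V(G)$ such that every vertex not in $S$ has a neighbor in $S$ and $G[S]$ is connected; $G$ is connected-domishold if there exist $w:V(G)\to\mathbb{R}_{\ge0}$, $t\in\mathbb{R}_{\ge0}$ such that for all $S\subseteq V(G)$, $\sum_{x\in S}w(x)\ge t$ iff $S$ is a connected dominating set. *)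

theory Defs
  imports Complex_Main
begin

definition hypergraph :: "'a set \<Rightarrow> 'a set set \<Rightarrow> bool" where
  "hypergraph V E \<longleftrightarrow> finite V \<and> (\<forall>e\<in>E. e \<subseteq> V)"

definition threshold_hypergraph :: "'a set \<Rightarrow> 'a set set \<Rightarrow> bool" where
  "threshold_hypergraph V E \<longleftrightarrow>
     (\<exists>(w :: 'a \<Rightarrow> real) (t :: real). (\<forall>x\<in>V. 0 \<le> w x) \<and> 0 \<le> t \<and>
        (\<forall>X. X \<subseteq> V \<longrightarrow> ((\<Sum>x\<in>X. w x) \<le> t \<longleftrightarrow> \<not> (\<exists>e\<in>E. e \<subseteq> X))))"

definition si_vertices :: "'a set \<Rightarrow> 'a set set \<Rightarrow> ('a + 'a set) set" where
  "si_vertices V E = Inl ` V \<union> Inr ` E"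

fun si_adj :: "('a + 'a set) \<Rightarrow> ('a + 'a set) \<Rightarrow> bool" where
  "si_adj (Inl u) (Inl v) = (u \<noteq> v)"
| "si_adj (Inl v) (Inr e) = (v \<in> e)"
| "si_adj (Inr e) (Inl v) = (v \<in> e)"
| "si_adj (Inr e) (Inr f) = False"

definition induced_connected :: "('v \<Rightarrow> 'v \<Rightarrow> bool) \<Rightarrow> 'v set \<Rightarrow> bool" where
  "induced_connected adj S \<longleftrightarrow>
     (\<forall>x\<in>S. \<forall>y\<in>S. (x, y) \<in> {(a, b). a \<in> S \<and> b \<in> S \<and> adj a b}\<^sup>*)"

definition connected_graph :: "'v set \<Rightarrow> ('v \<Rightarrow> 'v \<Rightarrow> bool) \<Rightarrow> bool" where
  "connected_graph VG adj \<longleftrightarrow> induced_connected adj VG"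

definition dominating_set :: "'v set \<Rightarrow> ('v \<Rightarrow> 'v \<Rightarrow> bool) \<Rightarrow> 'v set \<Rightarrow> bool" where
  "dominating_set VG adj S \<longleftrightarrow> S \<subseteq> VG \<and> (\<forall>v\<in>VG - S. \<exists>u\<in>S. adj v u)"

definition connected_dominating_set :: "'v set \<Rightarrow> ('v \<Rightarrow> 'v \<Rightarrow> bool) \<Rightarrow> 'v set \<Rightarrow> bool" where
  "connected_dominating_set VG adj S \<longleftrightarrow> dominating_set VG adj S \<and> induced_connected adj S"

definition connected_domishold :: "'v set \<Rightarrow> ('v \<Rightarrow> 'v \<Rightarrow> bool) \<Rightarrow> bool" where
  "connected_domishold VG adj \<longleftrightarrow> connected_graph VG adj \<and>
     (\<exists>(w :: 'v \<Rightarrow> real) (t :: real). (\<forall>x\<in>VG. 0 \<le> w x) \<and> 0 \<le> t \<and>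
        (\<forall>S. S \<subseteq> VG \<longrightarrow> ((\<Sum>x\<in>S. w x) \<ge> t \<longleftrightarrow> connected_dominating_set VG adj S)))"

end

theory Submission
  imports Defs
begin

abbreviation RR :: "('v \<Rightarrow> 'v \<Rightarrow> bool) \<Rightarrow> 'v set \<Rightarrow> ('v \<times> 'v) set" where
  "RR adj S \<equiv> {(a, b). a \<in> S \<and> b \<in> S \<and> adj a b}"

lemma step1: "a \<in> S \<Longrightarrow> b \<in> S \<Longrightarrow> adj a b \<Longrightarrow> (a, b) \<in> (RR adj S)\<^sup>*"
  by (rule r_into_rtrancl) simp

lemma hub_conn:
  assumes "\<And>x. x \<in> S \<Longrightarrow> (x, c) \<in> (RR adj S)\<^sup>* \<and> (c, x) \<in> (RR adj S)\<^sup>*"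
  shows "induced_connected adj S"
  unfolding induced_connected_def
  using assms by (meson rtrancl_trans)

lemma si_adj_sym: "si_adj a b = si_adj b a"
  by (cases a; cases b) auto

lemma finVG: "hypergraph V E \<Longrightarrow> finite (si_vertices V E)"
proof -
  assume h: "hypergraph V E"
  then have "E \<subseteq> Pow V" "finite V" unfolding hypergraph_def by auto
  then have "finite E" by (meson finite_Pow_iff finite_subset)
  then show ?thesis using \<open>finite V\<close> unfolding si_vertices_def by auto
qed

lemma Eempty: "hypergraph {} E \<Longrightarrow> {} \<notin> E \<Longrightarrow> E = {}"
  unfolding hypergraph_def by auto

lemma conn:
  assumes h: "hypergraph V E" and ne: "{} \<notin> E"
  shows "connected_graph (si_vertices V E) si_adj"
proof (cases "V = {}")
  case True
  then have "E = {}" using Eempty h ne by blast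
  then show ?thesis using True unfolding connected_graph_def induced_connected_def si_vertices_def by auto
next
  case False
  then obtain v0 where v0: "v0 \<in> V" by auto
  let ?S = "si_vertices V E"
  have inl: "(Inl v, Inl v0) \<in> (RR si_adj ?S)\<^sup>* \<and> (Inl v0, Inl v) \<in> (RR si_adj ?S)\<^sup>*" if "v \<in> V" for v
  proof (cases "v = v0")
    case True then show ?thesis by simp
  next
    case False
    then show ?thesis using step1[of "Inl v" ?S "Inl v0" si_adj] step1[of "Inl v0" ?S "Inl v" si_adj]
      that v0 unfolding si_vertices_def by auto
  qed
  show ?thesis unfolding connected_graph_def
  proof (rule hub_conn[where c="Inl v0"])
    fix x assume x: "x \<in> ?S"
    show "(x, Inl v0) \<in> (RR si_adj ?S)\<^sup>* \<and> (Inl v0, x) \<in> (RR si_adj ?S)\<^sup>*"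
    proof (cases x)
      case (Inl v)
      then show ?thesis using x inl unfolding si_vertices_def by auto
    next
      case (Inr e)
      then have e: "e \<in> E" using x unfolding si_vertices_def by auto
      then obtain v where v: "v \<in> e" using ne by (metis all_not_in_conv)
      then have vV: "v \<in> V" using h e unfolding hypergraph_def by auto
      have a: "(x, Inl v) \<in> (RR si_adj ?S)\<^sup>*" "(Inl v, x) \<in> (RR si_adj ?S)\<^sup>*"
        using step1[of x ?S "Inl v" si_adj] step1[of "Inl v" ?S x si_adj] x vV v Inr
        unfolding si_vertices_def by auto
      show ?thesis using a inl[OF vV] by (meson rtrancl_trans)
    qed
  qed
qed

lemma cds_suff:
  assumes S: "S \<subseteq> si_vertices V E" and a0: "Inl a0 \<in> S"
    and tr: "\<forall>e\<in>E. \<exists>v\<in>e. Inl v \<in> S"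
  shows "connected_dominating_set (si_vertices V E) si_adj S"
proof -
  have dom: "dominating_set (si_vertices V E) si_adj S"
    unfolding dominating_set_def
  proof (intro conjI ballI)
    show "S \<subseteq> si_vertices V E" by (rule S)
    fix x assume x: "x \<in> si_vertices V E - S"
    show "\<exists>u\<in>S. si_adj x u"
    proof (cases x)
      case (Inl v)
      then have "v \<noteq> a0" using x a0 by auto
      then show ?thesis using a0 Inl by (intro bexI[of _ "Inl a0"]) auto
    next
      case (Inr e)
      then have "e \<in> E" using x unfolding si_vertices_def by auto
      then obtain v where "v \<in> e" "Inl v \<in> S" using tr by auto
      then show ?thesis using Inr by (intro bexI[of _ "Inl v"]) auto
    qed
  qed
  have inl: "(Inl v, Inl a0) \<in> (RR si_adj S)\<^sup>* \<and> (Inl a0, Inl v) \<in> (RR si_adj S)\<^sup>*" if "Inl v \<in> S" for v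
  proof (cases "v = a0")
    case True then show ?thesis by simp
  next
    case False
    then show ?thesis using step1[of "Inl v" S "Inl a0" si_adj] step1[of "Inl a0" S "Inl v" si_adj]
      that a0 by auto
  qed
  have ic: "induced_connected si_adj S"
  proof (rule hub_conn[where c="Inl a0"])
    fix x assume x: "x \<in> S"
    show "(x, Inl a0) \<in> (RR si_adj S)\<^sup>* \<and> (Inl a0, x) \<in> (RR si_adj S)\<^sup>*"
    proof (cases x)
      case (Inl v)
      then show ?thesis using x inl[of v] by simp
    next
      case (Inr e)
      then have "Inr e \<in> si_vertices V E" using x S by auto
      then have e: "e \<in> E" unfolding si_vertices_def by auto
      then obtain v where v: "v \<in> e" "Inl v \<in> S" using tr by auto
      have a: "(x, Inl v) \<in> (RR si_adj S)\<^sup>*" "(Inl v, x) \<in> (RR si_adj S)\<^sup>*"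
        using step1[of x S "Inl v" si_adj] step1[of "Inl v" S x si_adj] x v Inr by auto
      show ?thesis using a inl[OF v(2)] by (meson rtrancl_trans)
    qed
  qed
  show "connected_dominating_set (si_vertices V E) si_adj S"
    unfolding connected_dominating_set_def using dom ic by auto
qed

lemma cds_char:
  assumes h: "hypergraph V E" and ne: "{} \<notin> E" and En: "E \<noteq> {}" and EV: "E \<noteq> {V}"
    and S: "S \<subseteq> si_vertices V E"
  shows "connected_dominating_set (si_vertices V E) si_adj S \<longleftrightarrow> (\<forall>e\<in>E. \<exists>v\<in>e. Inl v \<in> S)"
proof
  assume cds: "connected_dominating_set (si_vertices V E) si_adj S"
  then have dom: "\<And>x. x \<in> si_vertices V E - S \<Longrightarrow> \<exists>u\<in>S. si_adj x u"
    and ic: "induced_connected si_adj S"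
    unfolding connected_dominating_set_def dominating_set_def by blast+
  show "\<forall>e\<in>E. \<exists>v\<in>e. Inl v \<in> S"
  proof (rule ccontr)
    assume "\<not> ?thesis"
    then obtain e where e: "e \<in> E" and no: "\<And>v. v \<in> e \<Longrightarrow> Inl v \<notin> S" by auto
    show False
    proof (cases "Inr e \<in> S")
      case False
      then have "Inr e \<in> si_vertices V E - S" using e unfolding si_vertices_def by auto
      then obtain u where "u \<in> S" "si_adj (Inr e) u" using dom[of "Inr e"] by blast
      then show False using no by (cases u) auto
    next
      case True
      have "\<exists>y\<in>S. y \<noteq> Inr e"
      proof (rule ccontr)
        assume "\<not> ?thesis"
        then have "\<forall>y\<in>S. y = Inr e" by simp
        then have all: "\<And>y. y \<in> S \<Longrightarrow> y = Inr e" by blast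
        have Se: "S = {Inr e}"
        proof (rule equalityI)
          show "S \<subseteq> {Inr e}"
          proof
            fix y assume "y \<in> S"
            then have "y = Inr e" by (rule all)
            then show "y \<in> {Inr e}" by simp
          qed
          show "{Inr e} \<subseteq> S" using True by simp
        qed
        have "E \<subseteq> {e}"
        proof
          fix e' assume "e' \<in> E"
          show "e' \<in> {e}"
          proof (rule ccontr)
            assume "e' \<notin> {e}"
            then have "Inr e' \<in> si_vertices V E - S" using \<open>e' \<in> E\<close> Se unfolding si_vertices_def by auto
            then have "\<exists>u\<in>{Inr e}. si_adj (Inr e') u" using dom Se by blast
            then show False by simp
          qed
        qed
        moreover have "V \<subseteq> e"
        proof
          fix v assume "v \<in> V"
          then have "Inl v \<in> si_vertices V E - S" using Se unfolding si_vertices_def by auto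
          then have "\<exists>u\<in>{Inr e}. si_adj (Inl v) u" using dom Se by blast
          then show "v \<in> e" by simp
        qed
        moreover have "e \<subseteq> V" using h e unfolding hypergraph_def by auto
        ultimately show False using e EV by auto
      qed
      then obtain y where y: "y \<in> S" "y \<noteq> Inr e" by auto
      then have "(Inr e, y) \<in> (RR si_adj S)\<^sup>*" using ic True unfolding induced_connected_def by blast
      then obtain z where "(Inr e, z) \<in> RR si_adj S"
        using y(2) by (cases rule: converse_rtranclE) auto
      then have "z \<in> S" "si_adj (Inr e) z" by auto
      then show False using no by (cases z) auto
    qed
  qed
next
  assume tr: "\<forall>e\<in>E. \<exists>v\<in>e. Inl v \<in> S"
  obtain e0 where "e0 \<in> E" using En by auto
  then obtain a0 where a0: "Inl a0 \<in> S" using tr by auto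
  show "connected_dominating_set (si_vertices V E) si_adj S" by (rule cds_suff[OF S a0 tr])
qed

lemma sum_Inl:
  assumes "finite S"
  shows "(\<Sum>x\<in>S. case_sum w (\<lambda>_. (0::real)) x) = (\<Sum>v\<in>Inl -` S. w v)"
proof -
  have fin: "finite (Inl -` S)" using assms by (simp add: finite_vimageI)
  have "(\<Sum>x\<in>S. case_sum w (\<lambda>_. 0) x) = (\<Sum>x\<in>S \<inter> range Inl. case_sum w (\<lambda>_. 0) x) + (\<Sum>x\<in>S - range Inl. case_sum w (\<lambda>_. 0) x)"
    using assms by (metis sum.Int_Diff)
  also have "(\<Sum>x\<in>S - range Inl. case_sum w (\<lambda>_. 0) x) = 0"
    by (rule sum.neutral) (auto split: sum.split)
  also have "S \<inter> range Inl = Inl ` (Inl -` S)" by auto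
  also have "(\<Sum>x\<in>Inl ` (Inl -` S). case_sum w (\<lambda>_. 0) x) = (\<Sum>v\<in>Inl -` S. w v)"
    by (subst sum.reindex) (auto simp: inj_on_def)
  finally show ?thesis by simp
qed

lemma sum_complement:
  fixes w :: "'a \<Rightarrow> real"
  assumes "finite V" "X \<subseteq> V"
  shows "(\<Sum>x\<in>V - X. w x) = (\<Sum>x\<in>V. w x) - (\<Sum>x\<in>X. w x)"
  using assms by (simp add: sum_diff)

lemma noedge_iff:
  assumes h: "hypergraph V E" and X: "X \<subseteq> V"
  shows "(\<not> (\<exists>e\<in>E. e \<subseteq> X)) \<longleftrightarrow> (\<forall>e\<in>E. \<exists>v\<in>e. v \<in> V - X)"
proof -
  have sub: "\<And>e. e \<in> E \<Longrightarrow> e \<subseteq> V" using h unfolding hypergraph_def by blast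
  have "\<And>e. e \<in> E \<Longrightarrow> (e \<subseteq> X \<longleftrightarrow> \<not> (\<exists>v\<in>e. v \<in> V - X))"
  proof -
    fix e assume "e \<in> E"
    then have "e \<subseteq> V" by (rule sub)
    then show "e \<subseteq> X \<longleftrightarrow> \<not> (\<exists>v\<in>e. v \<in> V - X)" by blast
  qed
  then show ?thesis by blast
qed

theorem mainTheorem6:
  fixes V :: "'a set" and E :: "'a set set"
  assumes "hypergraph V E" and "{} \<notin> E"
  shows "threshold_hypergraph V E \<longleftrightarrow> connected_domishold (si_vertices V E) si_adj"
proof -
  have h: "hypergraph V E" and ne: "{} \<notin> E" by fact+
  have finV: "finite V" using h unfolding hypergraph_def by blast
  have finVG: "finite (si_vertices V E)" by (rule finVG[OF h])
  have cg: "connected_graph (si_vertices V E) si_adj" by (rule conn[OF h ne])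
  have ones: "connected_domishold (si_vertices V E) si_adj"
    if char: "\<And>S. S \<subseteq> si_vertices V E \<Longrightarrow> connected_dominating_set (si_vertices V E) si_adj S \<longleftrightarrow> S \<noteq> {}"
  unfolding connected_domishold_def
  proof (intro conjI exI[of _ "\<lambda>_. 1"] exI[of _ "1::real"] ballI allI impI)
    show "connected_graph (si_vertices V E) si_adj" by (rule cg)
    show "0 \<le> (1::real)" by simp
    fix x show "0 \<le> (1::real)" by simp
  next
    fix S assume S: "S \<subseteq> si_vertices V E"
    have "finite S" using S finVG finite_subset by blast
    then have "(S \<noteq> {}) \<longleftrightarrow> (\<Sum>x\<in>S. (1::real)) \<ge> 1" by (simp add: Suc_le_eq card_gt_0_iff)
    then show "(1 \<le> (\<Sum>x\<in>S. (1::real))) = connected_dominating_set (si_vertices V E) si_adj S"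
      using char[OF S] by simp
  qed
  show ?thesis
  proof (cases "V = {}")
    case True
    then have E0: "E = {}" using Eempty h ne by blast
    have th: "threshold_hypergraph V E" unfolding threshold_hypergraph_def
      by (rule exI[of _ "\<lambda>_. 0"], rule exI[of _ 0]) (simp add: True E0)
    have VG0: "si_vertices V E = {}" using True E0 by (simp add: si_vertices_def)
    have cd: "connected_domishold (si_vertices V E) si_adj" unfolding connected_domishold_def
    proof (intro conjI exI[of _ "\<lambda>_. 0"] exI[of _ "0::real"] ballI allI impI)
      show "connected_graph (si_vertices V E) si_adj" by (rule cg)
      show "0 \<le> (0::real)" by simp
      fix x show "0 \<le> (0::real)" by simp
    next
      fix S assume "S \<subseteq> si_vertices V E"
      then have "S = {}" using VG0 by blast
      then show "(0 \<le> (\<Sum>x\<in>S. (0::real))) = connected_dominating_set (si_vertices V E) si_adj S"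
        using VG0 by (simp add: connected_dominating_set_def dominating_set_def induced_connected_def)
    qed
    show ?thesis using th cd by blast
  next
    case Vne: False
    have notempty: "\<not> connected_dominating_set (si_vertices V E) si_adj {}"
    proof
      assume "connected_dominating_set (si_vertices V E) si_adj {}"
      then have "\<forall>v\<in>si_vertices V E - {}. \<exists>u\<in>{}. si_adj v u"
        unfolding connected_dominating_set_def dominating_set_def by blast
      moreover obtain v where "v \<in> V" using Vne by blast
      ultimately show False unfolding si_vertices_def by blast
    qed
    show ?thesis
    proof (cases "E = {}")
      case E0: True
      have th: "threshold_hypergraph V E" unfolding threshold_hypergraph_def
        by (rule exI[of _ "\<lambda>_. 0"], rule exI[of _ 0]) (simp add: E0)
      have char: "connected_dominating_set (si_vertices V E) si_adj S \<longleftrightarrow> S \<noteq> {}"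
        if S: "S \<subseteq> si_vertices V E" for S
      proof
        assume "connected_dominating_set (si_vertices V E) si_adj S"
        then show "S \<noteq> {}" using notempty by blast
      next
        assume "S \<noteq> {}"
        then obtain x where x: "x \<in> S" by blast
        then obtain a where "x = Inl a" using S E0 unfolding si_vertices_def by blast
        then have "Inl a \<in> S" using x by simp
        moreover have "\<forall>e\<in>E. \<exists>v\<in>e. Inl v \<in> S" using E0 by simp
        ultimately show "connected_dominating_set (si_vertices V E) si_adj S"
          using cds_suff[OF S] by blast
      qed
      have cd: "connected_domishold (si_vertices V E) si_adj" by (rule ones[OF char])
      show ?thesis using th cd by blast
    next
      case En: False
      show ?thesis
      proof (cases "E = {V}")
        case EV: True
        have th: "threshold_hypergraph V E" unfolding threshold_hypergraph_def
        proof (intro exI[of _ "\<lambda>_. 1"] exI[of _ "real (card V) - 1/2"] conjI allI impI ballI)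
          have "card V \<ge> 1" using finV Vne by (simp add: Suc_le_eq card_gt_0_iff)
          then show "0 \<le> real (card V) - 1/2" by simp
          fix x show "0 \<le> (1::real)" by simp
        next
          fix X assume X: "X \<subseteq> V"
          have "(\<not> (\<exists>e\<in>E. e \<subseteq> X)) \<longleftrightarrow> X \<noteq> V" using X EV by blast
          also have "\<dots> \<longleftrightarrow> card X < card V"
            using X finV by (metis psubsetI psubset_card_mono card_subset_eq less_irrefl)
          also have "\<dots> \<longleftrightarrow> real (card X) \<le> real (card V) - 1/2" by linarith
          finally show "((\<Sum>x\<in>X. (1::real)) \<le> real (card V) - 1/2) = (\<not> (\<exists>e\<in>E. e \<subseteq> X))" by simp
        qed
        have char: "connected_dominating_set (si_vertices V E) si_adj S \<longleftrightarrow> S \<noteq> {}"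
          if S: "S \<subseteq> si_vertices V E" for S
        proof
          assume "connected_dominating_set (si_vertices V E) si_adj S"
          then show "S \<noteq> {}" using notempty by blast
        next
          assume "S \<noteq> {}"
          show "connected_dominating_set (si_vertices V E) si_adj S"
          proof (cases "\<exists>a. Inl a \<in> S")
            case True
            then obtain a where a: "Inl a \<in> S" by blast
            then have "a \<in> V" using S unfolding si_vertices_def by blast
            then have "\<forall>e\<in>E. \<exists>v\<in>e. Inl v \<in> S" using EV a by blast
            then show ?thesis using cds_suff[OF S a] by blast
          next
            case False
            have "S \<subseteq> {Inr V}"
            proof
              fix x assume "x \<in> S"
              then show "x \<in> {Inr V}" using S False EV unfolding si_vertices_def by blast
            qed
            then have SV: "S = {Inr V}" using \<open>S \<noteq> {}\<close> by blast
            have d: "dominating_set (si_vertices V E) si_adj S"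
              unfolding dominating_set_def
            proof (intro conjI ballI)
              show "S \<subseteq> si_vertices V E" by (rule S)
              fix x assume x: "x \<in> si_vertices V E - S"
              then obtain v where "x = Inl v" "v \<in> V" using SV EV unfolding si_vertices_def by blast
              then show "\<exists>u\<in>S. si_adj x u" using SV by simp
            qed
            have i: "induced_connected si_adj S" unfolding induced_connected_def using SV by simp
            show ?thesis unfolding connected_dominating_set_def using d i by blast
          qed
        qed
        have cd: "connected_domishold (si_vertices V E) si_adj" by (rule ones[OF char])
        show ?thesis using th cd by blast
      next
        case EV: False
        note char = cds_char[OF h ne En EV]
        show ?thesis
        proof
          assume "threshold_hypergraph V E"
          then obtain w :: "'a \<Rightarrow> real" and t :: real where wt: "(\<forall>x\<in>V. 0 \<le> w x) \<and> 0 \<le> t \<and>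
        (\<forall>X. X \<subseteq> V \<longrightarrow> ((\<Sum>x\<in>X. w x) \<le> t \<longleftrightarrow> \<not> (\<exists>e\<in>E. e \<subseteq> X)))"
            unfolding threshold_hypergraph_def by (elim exE) (rule that)
          then have w: "\<forall>x\<in>V. 0 \<le> w x" by (rule conjunct1)
          from wt have t: "0 \<le> t" by (rule conjunct1[OF conjunct2])
          from wt have thr0: "\<forall>X. X \<subseteq> V \<longrightarrow> ((\<Sum>x\<in>X. w x) \<le> t \<longleftrightarrow> \<not> (\<exists>e\<in>E. e \<subseteq> X))" by (rule conjunct2[OF conjunct2])
          have thr: "\<And>X. X \<subseteq> V \<Longrightarrow> ((\<Sum>x\<in>X. w x) \<le> t \<longleftrightarrow> \<not> (\<exists>e\<in>E. e \<subseteq> X))"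
            using thr0 by (elim allE impE)
          define w' :: "'a + 'a set \<Rightarrow> real" where "w' = case_sum w (\<lambda>_. (0::real))"
          obtain e0 where e0: "e0 \<in> E" using En by blast
          then have "e0 \<subseteq> V" using h unfolding hypergraph_def by blast
          then have "\<not> (\<Sum>x\<in>V. w x) \<le> t" using thr[of V] e0 by blast
          then have tpos: "0 \<le> (\<Sum>x\<in>V. w x) - t" using t by linarith
          show "connected_domishold (si_vertices V E) si_adj" unfolding connected_domishold_def
          proof (intro conjI exI[of _ w'] exI[of _ "(\<Sum>x\<in>V. w x) - t"] ballI allI impI)
            show "connected_graph (si_vertices V E) si_adj" by (rule cg)
            show "0 \<le> (\<Sum>x\<in>V. w x) - t" by (rule tpos)
            fix x assume "x \<in> si_vertices V E"
            then show "0 \<le> w' x" using w unfolding w'_def si_vertices_def by auto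
          next
            fix S assume S: "S \<subseteq> si_vertices V E"
            have finS: "finite S" using S finVG finite_subset by blast
            define A where "A = Inl -` S"
            have AV: "A \<subseteq> V" using S unfolding A_def si_vertices_def by auto
            have e1: "(\<Sum>x\<in>S. w' x) = (\<Sum>v\<in>A. w v)" unfolding w'_def A_def by (rule sum_Inl[OF finS])
            have e2: "(\<Sum>x\<in>V - A. w x) = (\<Sum>x\<in>V. w x) - (\<Sum>x\<in>A. w x)"
              by (rule sum_complement[OF finV AV])
            have e3: "V - (V - A) = A" using AV by blast
            have e4: "(\<Sum>x\<in>V - A. w x) \<le> t \<longleftrightarrow> (\<forall>e\<in>E. \<exists>v\<in>e. v \<in> V - (V - A))"
              using thr[of "V - A"] noedge_iff[OF h, of "V - A"] by blast
            have e5: "(\<forall>e\<in>E. \<exists>v\<in>e. v \<in> A) \<longleftrightarrow> (\<forall>e\<in>E. \<exists>v\<in>e. Inl v \<in> S)"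
              unfolding A_def by simp
            have "((\<Sum>x\<in>V. w x) - t \<le> (\<Sum>x\<in>S. w' x)) \<longleftrightarrow> (\<Sum>x\<in>V - A. w x) \<le> t"
              using e1 e2 by linarith
            also have "\<dots> \<longleftrightarrow> (\<forall>e\<in>E. \<exists>v\<in>e. Inl v \<in> S)" using e4 e3 e5 by simp
            also have "\<dots> \<longleftrightarrow> connected_dominating_set (si_vertices V E) si_adj S" using char[OF S] by simp
            finally show "((\<Sum>x\<in>V. w x) - t \<le> (\<Sum>x\<in>S. w' x)) = connected_dominating_set (si_vertices V E) si_adj S" .
          qed
        next
          assume "connected_domishold (si_vertices V E) si_adj"
          then have "connected_graph (si_vertices V E) si_adj \<and> (\<exists>(w :: 'a + 'a set \<Rightarrow> real) (t :: real). (\<forall>x\<in>si_vertices V E. 0 \<le> w x) \<and> 0 \<le> t \<and>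
        (\<forall>S. S \<subseteq> si_vertices V E \<longrightarrow> ((\<Sum>x\<in>S. w x) \<ge> t \<longleftrightarrow> connected_dominating_set (si_vertices V E) si_adj S)))"
            unfolding connected_domishold_def .
          then have "\<exists>(w :: 'a + 'a set \<Rightarrow> real) (t :: real). (\<forall>x\<in>si_vertices V E. 0 \<le> w x) \<and> 0 \<le> t \<and>
        (\<forall>S. S \<subseteq> si_vertices V E \<longrightarrow> ((\<Sum>x\<in>S. w x) \<ge> t \<longleftrightarrow> connected_dominating_set (si_vertices V E) si_adj S))"
            by (rule conjunct2)
          then obtain w' :: "'a + 'a set \<Rightarrow> real" and t' :: real where wt: "(\<forall>x\<in>si_vertices V E. 0 \<le> w' x) \<and> 0 \<le> t' \<and>
        (\<forall>S. S \<subseteq> si_vertices V E \<longrightarrow> ((\<Sum>x\<in>S. w' x) \<ge> t' \<longleftrightarrow> connected_dominating_set (si_vertices V E) si_adj S))"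
            by (elim exE) (rule that)
          then have w': "\<forall>x\<in>si_vertices V E. 0 \<le> w' x" by (rule conjunct1)
          from wt have t': "0 \<le> t'" by (rule conjunct1[OF conjunct2])
          from wt have thr0: "\<forall>S. S \<subseteq> si_vertices V E \<longrightarrow> ((\<Sum>x\<in>S. w' x) \<ge> t' \<longleftrightarrow> connected_dominating_set (si_vertices V E) si_adj S)" by (rule conjunct2[OF conjunct2])
          have thr: "\<And>S. S \<subseteq> si_vertices V E \<Longrightarrow> ((\<Sum>x\<in>S. w' x) \<ge> t' \<longleftrightarrow> connected_dominating_set (si_vertices V E) si_adj S)"
            using thr0 by (elim allE impE)
          define w where "w = (\<lambda>v. w' (Inl v))"
          have key: "(\<Sum>x\<in>X. w x) \<le> (\<Sum>x\<in>V. w x) - t' \<longleftrightarrow> \<not> (\<exists>e\<in>E. e \<subseteq> X)"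
            if X: "X \<subseteq> V" for X
          proof -
            let ?A = "V - X"
            let ?IA = "(Inl ` (V - X) :: ('a + 'a set) set)"
            have sub: "Inl ` ?A \<subseteq> si_vertices V E" unfolding si_vertices_def by blast
            have e1: "(\<Sum>x\<in>Inl ` ?A. w' x) = (\<Sum>v\<in>?A. w v)"
              unfolding w_def by (subst sum.reindex) (auto simp: inj_on_def)
            have e2: "(\<Sum>x\<in>V - X. w x) = (\<Sum>x\<in>V. w x) - (\<Sum>x\<in>X. w x)"
              by (rule sum_complement[OF finV X])
            have e3: "(\<forall>e\<in>E. \<exists>v\<in>e. Inl v \<in> ?IA) \<longleftrightarrow> (\<forall>e\<in>E. \<exists>v\<in>e. v \<in> V - X)"
              by blast
            have "(\<Sum>x\<in>X. w x) \<le> (\<Sum>x\<in>V. w x) - t' \<longleftrightarrow> t' \<le> (\<Sum>x\<in>Inl ` ?A. w' x)"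
              using e1 e2 by linarith
            also have "\<dots> \<longleftrightarrow> (\<forall>e\<in>E. \<exists>v\<in>e. Inl v \<in> ?IA)" using thr[OF sub] char[OF sub] by simp
            also have "\<dots> \<longleftrightarrow> \<not> (\<exists>e\<in>E. e \<subseteq> X)" using e3 noedge_iff[OF h X] by simp
            finally show ?thesis .
          qed
          have t0: "0 \<le> (\<Sum>x\<in>V. w x) - t'" using key[of "{}"] ne by simp
          show "threshold_hypergraph V E" unfolding threshold_hypergraph_def
          proof (intro exI[of _ w] exI[of _ "(\<Sum>x\<in>V. w x) - t'"] conjI allI impI ballI)
            show "0 \<le> (\<Sum>x\<in>V. w x) - t'" by (rule t0)
            fix x assume "x \<in> V"
            then show "0 \<le> w x" using w' unfolding w_def si_vertices_def by blast
          next
            fix X assume "X \<subseteq> V"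
            then show "((\<Sum>x\<in>X. w x) \<le> (\<Sum>x\<in>V. w x) - t') = (\<not> (\<exists>e\<in>E. e \<subseteq> X))" by (rule key)
          qed
        qed
      qed
    qed
  qed
qed

end
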